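(* Let $p \in [0,1]$. Consider the two-way eavesdropping on the semiquantum protocol described below. (i) SIFT bits: Alice sends a bit $a$ to Bob through a binary symmetric channel with crossover probability $p$; Bob measures in the $Z$ basis, obtaining $b$, and sends a fresh qubit encoding $b$ back to Alice through an independent binary symmetric channel with crossover probability $p$. (ii) CTRL bits: Alice sends $|a\rangle$; Eve applies a unitary $U$ with $U(|W\rangle|0\rangle) = \sqrt{1-p}\,|E_{00}\rangle|0\rangle + \sqrt{p}\,|E_{01}\rangle|1\rangle$, $U(|W\rangle|1\rangle) = \sqrt{p}\,|E_{10}\rangle|0\rangle + \sqrt{1-p}\,|E_{11}\rangle|1\rangle$; Bob reflects the qubit unchanged; Eve applies, with a fresh probe $|W'\rangle$, a unitary $U'$ of the same form with unit vectors $|E'_{ij}\rangle$; Alice measures in the $Z$ basis. Here all $|E_{ij}\rangle, |E'_{ij}\rangle$ are unit vectors in Eve's probe spaces and $\langle E_{00}|E_{01}\rangle = \langle E_{10}|E_{11}\rangle = 0$. Then the round-trip channels from Alice to Bob back to Alice in case (i) and in case (ii) are equivalent: both act as a binary symmetric channel with crossover probability $2p(1-p)$.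
   Context: In the semiquantum key distribution protocol, Bob either reflects a received qubit unchanged (CTRL bits) or measures it in the $Z$ basis $\{|0\rangle,|1\rangle\}$ and resends a fresh qubit in the measured state (SIFT bits). A binary symmetric channel with crossover probability $q$ flips the input bit with probability $q$ and leaves it unchanged with probability $1-q$, independently of the input value. *)

theory Defs
  imports Complex_Main
begin

text \<open>Computational basis of a qubit: False encodes |0>, True encodes |1>.\<close>
definition ket :: "bool \<Rightarrow> bool \<Rightarrow> complex" where
  "ket b x = (if x = b then 1 else 0)"

definition cinner :: "('i::finite \<Rightarrow> complex) \<Rightarrow> ('i \<Rightarrow> complex) \<Rightarrow> complex" where
  "cinner u v = (\<Sum>i\<in>UNIV. cnj (u i) * v i)"

definition unit_vec :: "('i::finite \<Rightarrow> complex) \<Rightarrow> bool" where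
  "unit_vec u \<longleftrightarrow> cinner u u = 1"

definition matvec :: "('i::finite \<Rightarrow> 'i \<Rightarrow> complex) \<Rightarrow> ('i \<Rightarrow> complex) \<Rightarrow> ('i \<Rightarrow> complex)" where
  "matvec M v = (\<lambda>i. \<Sum>j\<in>UNIV. M i j * v j)"

definition unitary_mat :: "('i::finite \<Rightarrow> 'i \<Rightarrow> complex) \<Rightarrow> bool" where
  "unitary_mat M \<longleftrightarrow> (\<forall>i j. (\<Sum>k\<in>UNIV. cnj (M k i) * M k j) = (if i = j then 1 else 0))"

definition bsc :: "real \<Rightarrow> bool \<Rightarrow> bool \<Rightarrow> real" where
  "bsc q x y = (if x = y then 1 - q else q)"

text \<open>SIFT round trip: Alice -> BSC(p) -> Bob measures b, resends b -> BSC(p) -> Alice.\<close>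
definition sift_prob :: "real \<Rightarrow> bool \<Rightarrow> bool \<Rightarrow> real" where
  "sift_prob p a c = (\<Sum>b\<in>UNIV. bsc p a b * bsc p b c)"

text \<open>Joint state of probe 1 ('e), probe 2 ('f) and the travelling qubit.\<close>
definition init_state :: "('e \<Rightarrow> complex) \<Rightarrow> ('f \<Rightarrow> complex) \<Rightarrow> bool \<Rightarrow> ('e \<times> 'f \<times> bool \<Rightarrow> complex)" where
  "init_state W W' a = (\<lambda>(e, f, x). W e * W' f * ket a x)"

definition apply1 :: "('e::finite \<times> bool \<Rightarrow> 'e \<times> bool \<Rightarrow> complex) \<Rightarrow> ('e \<times> 'f \<times> bool \<Rightarrow> complex) \<Rightarrow> ('e \<times> 'f \<times> bool \<Rightarrow> complex)" where
  "apply1 U \<psi> = (\<lambda>(e, f, x). \<Sum>(e', x')\<in>UNIV. U (e, x) (e', x') * \<psi> (e', f, x'))"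

definition apply2 :: "('f::finite \<times> bool \<Rightarrow> 'f \<times> bool \<Rightarrow> complex) \<Rightarrow> ('e \<times> 'f \<times> bool \<Rightarrow> complex) \<Rightarrow> ('e \<times> 'f \<times> bool \<Rightarrow> complex)" where
  "apply2 U' \<psi> = (\<lambda>(e, f, x). \<Sum>(f', x')\<in>UNIV. U' (f, x) (f', x') * \<psi> (e, f', x'))"

text \<open>Probability that Alice's Z-measurement of the qubit yields c (probes traced out).\<close>
definition z_meas_prob :: "('e::finite \<times> 'f::finite \<times> bool \<Rightarrow> complex) \<Rightarrow> bool \<Rightarrow> real" where
  "z_meas_prob \<psi> c = (\<Sum>(e, f)\<in>UNIV. (cmod (\<psi> (e, f, c)))\<^sup>2)"

text \<open>CTRL round trip: U, Bob reflects (identity), U' with fresh probe W', Alice measures in Z.\<close>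
definition ctrl_prob :: "('e::finite \<times> bool \<Rightarrow> 'e \<times> bool \<Rightarrow> complex) \<Rightarrow> ('f::finite \<times> bool \<Rightarrow> 'f \<times> bool \<Rightarrow> complex)
    \<Rightarrow> ('e \<Rightarrow> complex) \<Rightarrow> ('f \<Rightarrow> complex) \<Rightarrow> bool \<Rightarrow> bool \<Rightarrow> real" where
  "ctrl_prob U U' W W' a c = z_meas_prob (apply2 U' (apply1 U (init_state W W' a))) c"

definition eve_form :: "real \<Rightarrow> ('i::finite \<times> bool \<Rightarrow> 'i \<times> bool \<Rightarrow> complex) \<Rightarrow> ('i \<Rightarrow> complex)
    \<Rightarrow> ('i \<Rightarrow> complex) \<Rightarrow> ('i \<Rightarrow> complex) \<Rightarrow> ('i \<Rightarrow> complex) \<Rightarrow> ('i \<Rightarrow> complex) \<Rightarrow> bool" where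
  "eve_form p U W E00 E01 E10 E11 \<longleftrightarrow>
     matvec U (\<lambda>(i, x). W i * ket False x) =
       (\<lambda>(i, x). complex_of_real (sqrt (1 - p)) * E00 i * ket False x
               + complex_of_real (sqrt p) * E01 i * ket True x) \<and>
     matvec U (\<lambda>(i, x). W i * ket True x) =
       (\<lambda>(i, x). complex_of_real (sqrt p) * E10 i * ket False x
               + complex_of_real (sqrt (1 - p)) * E11 i * ket True x)"

end

theory Submission imports Defs begin
lemma sum_pair_prod: "(\<Sum>(e,f)\<in>(UNIV::('a::finite\<times>'b::finite) set). g e * h f) = (\<Sum>e\<in>UNIV. g e) * (\<Sum>f\<in>UNIV. (h f::complex))"
  by (simp add: sum_product sum.cartesian_product flip: UNIV_Times_UNIV)

lemma sum_pair_prod': "(\<Sum>x\<in>(UNIV::('a::finite\<times>'b::finite) set). g (fst x) * h (snd x)) = (\<Sum>e\<in>UNIV. g e) * (\<Sum>f\<in>UNIV. (h f::complex))"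
  using sum_pair_prod[of g h] by (simp add: split_def)

lemma pair_double: "(\<Sum>x\<in>(UNIV::('a::finite\<times>'b::finite) set). F x) = (\<Sum>e\<in>UNIV. \<Sum>f\<in>UNIV. (F (e,f) :: complex))"
  by (simp add: sum.cartesian_product flip: UNIV_Times_UNIV)

lemma key:
  fixes A0 A1 :: "'e::finite \<Rightarrow> complex" and B0 B1 :: "'f::finite \<Rightarrow> complex"
  assumes "unit_vec A0" "unit_vec A1" "unit_vec B0" "unit_vec B1" "cinner A0 A1 = 0"
  shows "(\<Sum>(e,f)\<in>UNIV. (cmod (of_real s0 * A0 e * B0 f + of_real s1 * A1 e * B1 f))^2) = s0^2 + s1^2"
proof -
  have c10: "cinner A1 A0 = 0"
  proof -
    have "cinner A1 A0 = cnj (cinner A0 A1)" unfolding cinner_def by (simp add: mult.commute)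
    thus ?thesis using assms(5) by simp
  qed
  have "complex_of_real (\<Sum>(e,f)\<in>UNIV. (cmod (of_real s0 * A0 e * B0 f + of_real s1 * A1 e * B1 f))^2)
     = (\<Sum>(e,f)\<in>UNIV. (of_real (s0^2) * (cnj (A0 e) * A0 e)) * (cnj (B0 f) * B0 f)
        + (of_real (s0*s1) * (cnj (A0 e) * A1 e)) * (cnj (B0 f) * B1 f)
        + (of_real (s0*s1) * (cnj (A1 e) * A0 e)) * (cnj (B1 f) * B0 f)
        + (of_real (s1^2) * (cnj (A1 e) * A1 e)) * (cnj (B1 f) * B1 f))"
    unfolding of_real_sum
  proof (rule sum.cong, simp, clarify)
    fix e f
    show "complex_of_real ((cmod (of_real s0 * A0 e * B0 f + of_real s1 * A1 e * B1 f))^2)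
      = (of_real (s0^2) * (cnj (A0 e) * A0 e)) * (cnj (B0 f) * B0 f)
        + (of_real (s0*s1) * (cnj (A0 e) * A1 e)) * (cnj (B0 f) * B1 f)
        + (of_real (s0*s1) * (cnj (A1 e) * A0 e)) * (cnj (B1 f) * B0 f)
        + (of_real (s1^2) * (cnj (A1 e) * A1 e)) * (cnj (B1 f) * B1 f)"
      unfolding complex_norm_square by (simp add: algebra_simps power2_eq_square)
  qed
  also have "\<dots> = of_real (s0^2) * cinner A0 A0 * cinner B0 B0 + of_real (s0*s1) * cinner A0 A1 * cinner B0 B1
     + of_real (s0*s1) * cinner A1 A0 * cinner B1 B0 + of_real (s1^2) * cinner A1 A1 * cinner B1 B1"
    unfolding cinner_def pair_double by (simp add: sum_product sum_distrib_left sum.distrib mult_ac)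
  also have "\<dots> = complex_of_real (s0^2 + s1^2)"
    using assms c10 unfolding unit_vec_def by simp
  finally show ?thesis using of_real_eq_iff by blast
qed

lemma L1: "apply1 U (init_state W W' a) = (\<lambda>(e,f,x). matvec U (\<lambda>(i,y). W i * ket a y) (e,x) * W' f)"
  unfolding apply1_def init_state_def matvec_def
  by (auto simp: fun_eq_iff sum_distrib_right sum_distrib_left split_def mult_ac intro!: sum.cong)

lemma L2: "apply2 U' (\<lambda>(e,f,x). \<phi> (e,x) * W' f) = (\<lambda>(e,f,x). \<Sum>y\<in>UNIV. \<phi> (e,y) * matvec U' (\<lambda>(j,z). W' j * ket y z) (f,x))"
proof (rule ext, clarify)
  fix e f x
  have "(\<Sum>y\<in>UNIV. \<phi> (e,y) * (\<Sum>q\<in>UNIV. U' (f,x) q * (W' (fst q) * ket y (snd q))))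
      = (\<Sum>q\<in>UNIV. \<Sum>y\<in>UNIV. \<phi> (e,y) * (U' (f,x) q * (W' (fst q) * ket y (snd q))))"
    unfolding sum_distrib_left by (rule sum.swap)
  also have "\<dots> = (\<Sum>q\<in>UNIV. U' (f,x) q * (\<phi> (e, snd q) * W' (fst q)))"
    by (rule sum.cong) (auto simp: UNIV_bool ket_def)
  finally show "apply2 U' (\<lambda>(e,f,x). \<phi> (e,x) * W' f) (e,f,x) = (\<Sum>y\<in>UNIV. \<phi> (e,y) * matvec U' (\<lambda>(j,z). W' j * ket y z) (f,x))"
    unfolding apply2_def matvec_def by (simp add: split_def)
qed

lemma sift: "sift_prob p a c = bsc (2 * p * (1 - p)) a c"
  unfolding sift_prob_def bsc_def by (cases a; cases c) (simp_all add: UNIV_bool algebra_simps power2_eq_square)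

lemma L3:
  assumes "eve_form p U W E00 E01 E10 E11" "0 \<le> p" "p \<le> 1"
  shows "matvec U (\<lambda>(i,y). W i * ket a y) (e,x) = of_real (sqrt (bsc p a x)) *
     (if a then (if x then E11 else E10) else (if x then E01 else E00)) e"
proof -
  from assms(1) have h: "matvec U (\<lambda>(i,y). W i * ket a y) (e,x) =
     (if a then complex_of_real (sqrt p) * E10 e * ket False x + complex_of_real (sqrt (1 - p)) * E11 e * ket True x
      else complex_of_real (sqrt (1 - p)) * E00 e * ket False x + complex_of_real (sqrt p) * E01 e * ket True x)"
    unfolding eve_form_def by (cases a) (auto simp: fun_eq_iff)
  show ?thesis unfolding h by (cases a; cases x) (simp_all add: ket_def bsc_def)
qed
theorem theorem1:
  fixes p :: real
    and U :: "'e::finite \<times> bool \<Rightarrow> 'e \<times> bool \<Rightarrow> complex"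
    and U' :: "'f::finite \<times> bool \<Rightarrow> 'f \<times> bool \<Rightarrow> complex"
    and W E00 E01 E10 E11 :: "'e \<Rightarrow> complex"
    and W' E'00 E'01 E'10 E'11 :: "'f \<Rightarrow> complex"
  assumes "0 \<le> p" and "p \<le> 1"
    and "unitary_mat U" and "unitary_mat U'"
    and "unit_vec W" and "unit_vec W'"
    and "unit_vec E00" and "unit_vec E01" and "unit_vec E10" and "unit_vec E11"
    and "unit_vec E'00" and "unit_vec E'01" and "unit_vec E'10" and "unit_vec E'11"
    and "cinner E00 E01 = 0" and "cinner E10 E11 = 0"
    and "cinner E'00 E'01 = 0" and "cinner E'10 E'11 = 0"
    and "eve_form p U W E00 E01 E10 E11"
    and "eve_form p U' W' E'00 E'01 E'10 E'11"
  shows "\<forall>a c. sift_prob p a c = bsc (2 * p * (1 - p)) a c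
              \<and> ctrl_prob U U' W W' a c = bsc (2 * p * (1 - p)) a c"
  proof (intro allI conjI)
  fix a c
  show "sift_prob p a c = bsc (2 * p * (1 - p)) a c" by (rule sift)
  define Ef where "Ef a x = (if a then (if x then E11 else E10) else (if x then E01 else E00))" for a x
  define Gf where "Gf a x = (if a then (if x then E'11 else E'10) else (if x then E'01 else E'00))" for a x
  have bnn: "bsc p u v \<ge> 0" for u v using assms(1,2) by (simp add: bsc_def)
  have U1: "matvec U (\<lambda>(i,y). W i * ket u y) (e,x) = of_real (sqrt (bsc p u x)) * Ef u x e" for u x e
    using L3[OF assms(19) assms(1,2)] unfolding Ef_def by blast
  have U2: "matvec U' (\<lambda>(i,y). W' i * ket u y) (f,x) = of_real (sqrt (bsc p u x)) * Gf u x f" for u x f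
    using L3[OF assms(20) assms(1,2)] unfolding Gf_def by blast
  define s0 where "s0 = sqrt (bsc p a False) * sqrt (bsc p False c)"
  define s1 where "s1 = sqrt (bsc p a True) * sqrt (bsc p True c)"
  have amp: "apply2 U' (apply1 U (init_state W W' a)) (e,f,c)
     = of_real s0 * Ef a False e * Gf False c f + of_real s1 * Ef a True e * Gf True c f" for e f
    unfolding L1 L2 using U1 U2 by (simp add: UNIV_bool s0_def s1_def algebra_simps)
  have "ctrl_prob U U' W W' a c = (\<Sum>(e,f)\<in>UNIV. (cmod (of_real s0 * Ef a False e * Gf False c f + of_real s1 * Ef a True e * Gf True c f))^2)"
    unfolding ctrl_prob_def z_meas_prob_def using amp by (simp add: split_def)
  also have "\<dots> = s0^2 + s1^2"
    by (rule key) (use assms(7-18) in \<open>auto simp: Ef_def Gf_def\<close>)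
  also have "\<dots> = sift_prob p a c"
    using bnn by (simp add: s0_def s1_def sift_prob_def UNIV_bool power_mult_distrib)
  finally show "ctrl_prob U U' W W' a c = bsc (2 * p * (1 - p)) a c" using sift by simp
qed

end
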